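(* Let $n=2$ and let $t\mapsto (q(t),p(t))$, $t\ge0$, be a solution of $\dot q_i=\partial H/\partial p_i$, $\dot p_i=-\partial H/\partial q_i$, $H=\frac12\sum_{i,j=1}^2p_ip_je^{-|q_i-q_j|}$, with $q_1(0)>q_2(0)$, normalized so that $H_1:=p_1^2+p_2^2+2p_1p_2e^{-|q_1-q_2|}=1$ (equivalently the corresponding geodesic of $g=(e^{-|q_i-q_j|})^{-1}$ has unit speed). If $|p_1+p_2|>1$, or if $p_1-p_2>0$ at $t=0$, then the trajectory never approaches the singular set $\{q_1=q_2\}$; consequently the corresponding 2-peakon solution $u=p_1e^{-|x-q_1|}+p_2e^{-|x-q_2|}$ of the Camassa-Holm equation has no collision.
   Context: The quantity $p_1+p_2$ is constant along solutions. *)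

theory Defs
  imports "HOL-Analysis.Analysis"
begin

definition H :: "(nat \<Rightarrow> real) \<Rightarrow> (nat \<Rightarrow> real) \<Rightarrow> real" where
  "H q p = (1/2) * (\<Sum>i\<in>{1,2::nat}. \<Sum>j\<in>{1,2::nat}. p i * p j * exp (- \<bar>q i - q j\<bar>))"

definition hamiltonian_solution :: "(real \<Rightarrow> nat \<Rightarrow> real) \<Rightarrow> (real \<Rightarrow> nat \<Rightarrow> real) \<Rightarrow> bool" where
  "hamiltonian_solution q p \<longleftrightarrow>
     (\<forall>t\<ge>0. \<forall>i\<in>{1,2::nat}. \<exists>a b.
        ((\<lambda>x. H (q t) ((p t)(i := x))) has_real_derivative a) (at (p t i)) \<and>
        ((\<lambda>x. H ((q t)(i := x)) (p t)) has_real_derivative b) (at (q t i)) \<and>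
        ((\<lambda>s. q s i) has_real_derivative a) (at t within {0..}) \<and>
        ((\<lambda>s. p s i) has_real_derivative (- b)) (at t within {0..}))"

end

theory Submission
  imports Defs
begin

lemma H_expand: "H q p = (1/2) * ((p 1)^2 + (p 2)^2 + 2 * p 1 * p 2 * exp (- \<bar>q 1 - q 2\<bar>))"
  by (simp add: H_def abs_minus_commute power2_eq_square algebra_simps)

lemma dH_p1: "((\<lambda>x. H Q (P(1:=x))) has_real_derivative (P 1 + P 2 * exp (- \<bar>Q 1 - Q 2\<bar>))) (at (P 1))"
  unfolding H_expand by (auto intro!: derivative_eq_intros simp: algebra_simps)

lemma dH_p2: "((\<lambda>x. H Q (P(2:=x))) has_real_derivative (P 2 + P 1 * exp (- \<bar>Q 1 - Q 2\<bar>))) (at (P 2))"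
  unfolding H_expand by (auto intro!: derivative_eq_intros simp: algebra_simps)

lemma dH_q1:
  assumes "Q 1 > Q 2"
  shows "((\<lambda>x. H (Q(1:=x)) P) has_real_derivative (- (P 1 * P 2 * exp (- (Q 1 - Q 2))))) (at (Q 1))"
proof (rule has_field_derivative_transform_within_open[where S="{Q 2<..}"])
  show "((\<lambda>x. (1/2) * ((P 1)^2 + (P 2)^2 + 2 * P 1 * P 2 * exp (- (x - Q 2)))) has_real_derivative (- (P 1 * P 2 * exp (- (Q 1 - Q 2))))) (at (Q 1))"
    by (auto intro!: derivative_eq_intros simp: algebra_simps)
  show "Q 1 \<in> {Q 2<..}" using assms by simp
  fix x assume "x \<in> {Q 2<..}"
  then show "(1/2) * ((P 1)^2 + (P 2)^2 + 2 * P 1 * P 2 * exp (- (x - Q 2))) = H (Q(1:=x)) P"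
    by (simp add: H_expand)
qed simp

lemma dH_q2:
  assumes "Q 1 > Q 2"
  shows "((\<lambda>x. H (Q(2:=x)) P) has_real_derivative (P 1 * P 2 * exp (- (Q 1 - Q 2)))) (at (Q 2))"
proof (rule has_field_derivative_transform_within_open[where S="{..<Q 1}"])
  show "((\<lambda>x. (1/2) * ((P 1)^2 + (P 2)^2 + 2 * P 1 * P 2 * exp (- (Q 1 - x)))) has_real_derivative (P 1 * P 2 * exp (- (Q 1 - Q 2)))) (at (Q 2))"
    by (auto intro!: derivative_eq_intros simp: algebra_simps)
  show "Q 2 \<in> {..<Q 1}" using assms by simp
  fix x assume "x \<in> {..<Q 1}"
  then show "(1/2) * ((P 1)^2 + (P 2)^2 + 2 * P 1 * P 2 * exp (- (Q 1 - x))) = H (Q(2:=x)) P"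
    by (simp add: H_expand)
qed simp

lemma derivs:
  assumes sol: "hamiltonian_solution q p" and t: "t \<ge> 0" and r: "q t 1 > q t 2"
  defines "E \<equiv> exp (- (q t 1 - q t 2))"
  shows "((\<lambda>s. q s 1) has_real_derivative (p t 1 + p t 2 * E)) (at t within {0..})"
    "((\<lambda>s. q s 2) has_real_derivative (p t 2 + p t 1 * E)) (at t within {0..})"
    "((\<lambda>s. p s 1) has_real_derivative (p t 1 * p t 2 * E)) (at t within {0..})"
    "((\<lambda>s. p s 2) has_real_derivative (- (p t 1 * p t 2 * E))) (at t within {0..})"
proof -
  have ab: "\<And>i. i \<in> {1,2} \<Longrightarrow> \<exists>a b.
        ((\<lambda>x. H (q t) ((p t)(i := x))) has_real_derivative a) (at (p t i)) \<and>
        ((\<lambda>x. H ((q t)(i := x)) (p t)) has_real_derivative b) (at (q t i)) \<and>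
        ((\<lambda>s. q s i) has_real_derivative a) (at t within {0..}) \<and>
        ((\<lambda>s. p s i) has_real_derivative (- b)) (at t within {0..})"
    using sol t unfolding hamiltonian_solution_def by blast
  have Eabs: "exp (- \<bar>q t 1 - q t 2\<bar>) = E" using r by (simp add: E_def)
  obtain a b where 1: "((\<lambda>x. H (q t) ((p t)(1 := x))) has_real_derivative a) (at (p t 1))"
        "((\<lambda>x. H ((q t)(1 := x)) (p t)) has_real_derivative b) (at (q t 1))"
        "((\<lambda>s. q s 1) has_real_derivative a) (at t within {0..})"
        "((\<lambda>s. p s 1) has_real_derivative (- b)) (at t within {0..})"
    using ab[of 1] by auto
  have "a = p t 1 + p t 2 * E" using DERIV_unique[OF 1(1) dH_p1] Eabs by simp
  moreover have "b = - (p t 1 * p t 2 * E)" using DERIV_unique[OF 1(2) dH_q1[OF r]] by (simp add: E_def)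
  ultimately show "((\<lambda>s. q s 1) has_real_derivative (p t 1 + p t 2 * E)) (at t within {0..})"
    "((\<lambda>s. p s 1) has_real_derivative (p t 1 * p t 2 * E)) (at t within {0..})"
    using 1 by auto
  obtain a b where 2: "((\<lambda>x. H (q t) ((p t)(2 := x))) has_real_derivative a) (at (p t 2))"
        "((\<lambda>x. H ((q t)(2 := x)) (p t)) has_real_derivative b) (at (q t 2))"
        "((\<lambda>s. q s 2) has_real_derivative a) (at t within {0..})"
        "((\<lambda>s. p s 2) has_real_derivative (- b)) (at t within {0..})"
    using ab[of 2] by auto
  have "a = p t 2 + p t 1 * E" using DERIV_unique[OF 2(1) dH_p2] Eabs by simp
  moreover have "b = p t 1 * p t 2 * E" using DERIV_unique[OF 2(2) dH_q2[OF r]] by (simp add: E_def)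
  ultimately show "((\<lambda>s. q s 2) has_real_derivative (p t 2 + p t 1 * E)) (at t within {0..})"
    "((\<lambda>s. p s 2) has_real_derivative (- (p t 1 * p t 2 * E))) (at t within {0..})"
    using 2 by auto
qed


lemma cont:
  assumes sol: "hamiltonian_solution q p" and i: "i \<in> {1,2}"
  shows "continuous_on {0..} (\<lambda>s. q s i)" "continuous_on {0..} (\<lambda>s. p s i)"
proof -
  have "\<forall>t\<in>{0..}. continuous (at t within {0..}) (\<lambda>s. q s i) \<and> continuous (at t within {0..}) (\<lambda>s. p s i)"
  proof
    fix t :: real assume "t \<in> {0..}"
    then obtain a b where "((\<lambda>s. q s i) has_real_derivative a) (at t within {0..})"
        "((\<lambda>s. p s i) has_real_derivative (- b)) (at t within {0..})"
      using sol i unfolding hamiltonian_solution_def by fastforce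
    then show "continuous (at t within {0..}) (\<lambda>s. q s i) \<and> continuous (at t within {0..}) (\<lambda>s. p s i)"
      using DERIV_continuous by blast
  qed
  then show "continuous_on {0..} (\<lambda>s. q s i)" "continuous_on {0..} (\<lambda>s. p s i)"
    by (auto simp: continuous_on_eq_continuous_within)
qed

lemma conserv:
  assumes sol: "hamiltonian_solution q p" and pos: "\<forall>t\<in>{0..T}. q t 1 > q t 2"
  shows "\<forall>t\<in>{0..T}. p t 1 + p t 2 = p 0 1 + p 0 2"
    "\<forall>t\<in>{0..T}. (p t 1)^2 + (p t 2)^2 + 2 * p t 1 * p t 2 * exp (- (q t 1 - q t 2))
       = (p 0 1)^2 + (p 0 2)^2 + 2 * p 0 1 * p 0 2 * exp (- (q 0 1 - q 0 2))"
proof -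
  have sub: "{0..T} \<subseteq> {0::real..}" by auto
  have "\<exists>c. \<forall>t\<in>{0..T}. p t 1 + p t 2 = c"
  proof (rule has_field_derivative_zero_constant)
    fix t assume t: "t \<in> {0..T}"
    then have r: "q t 1 > q t 2" "t \<ge> 0" using pos by auto
    note D = derivs[OF sol r(2) r(1), THEN DERIV_subset[OF _ sub]]
    show "((\<lambda>t. p t 1 + p t 2) has_real_derivative 0) (at t within {0..T})"
      using DERIV_add[OF D(3) D(4)] by simp
  qed simp
  then obtain c where c: "\<forall>t\<in>{0..T}. p t 1 + p t 2 = c" by blast
  show "\<forall>t\<in>{0..T}. p t 1 + p t 2 = p 0 1 + p 0 2"
    proof
    fix t assume "t \<in> {0..T}"
    moreover then have "0 \<in> {0..T}" by auto
    ultimately show "p t 1 + p t 2 = p 0 1 + p 0 2" using c by metis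
  qed
  have "\<exists>c. \<forall>t\<in>{0..T}. (p t 1)^2 + (p t 2)^2 + 2 * p t 1 * p t 2 * exp (- (q t 1 - q t 2)) = c"
  proof (rule has_field_derivative_zero_constant)
    fix t assume t: "t \<in> {0..T}"
    then have r: "q t 1 > q t 2" "t \<ge> 0" using pos by auto
    note D = derivs[OF sol r(2) r(1), THEN DERIV_subset[OF _ sub]]
    show "((\<lambda>t. (p t 1)^2 + (p t 2)^2 + 2 * p t 1 * p t 2 * exp (- (q t 1 - q t 2))) has_real_derivative 0) (at t within {0..T})"
    proof -
      have e: "((\<lambda>t. exp (- (q t 1 - q t 2))) has_real_derivative exp (- (q t 1 - q t 2)) * (- ((p t 1 + p t 2 * exp (- (q t 1 - q t 2))) - (p t 2 + p t 1 * exp (- (q t 1 - q t 2)))))) (at t within {0..T})"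
        by (intro DERIV_chain2[OF DERIV_exp] DERIV_minus DERIV_diff D)
      define a where "a = p t 1" define b where "b = p t 2" define E where "E = exp (- (q t 1 - q t 2))"
      have "((\<lambda>t. p t 1 * p t 1 + p t 2 * p t 2 + 2 * (p t 1 * (p t 2 * exp (- (q t 1 - q t 2))))) has_real_derivative
        (a * (a*b*E) + (a*b*E) * a + (b * (-(a*b*E)) + (-(a*b*E)) * b)
         + 2 * (a * (b * (E * (- ((a + b * E) - (b + a * E)))) + (-(a*b*E)) * E) + (a*b*E) * (b * E))))
        (at t within {0..T})"
        unfolding a_def b_def E_def
        by (intro DERIV_add DERIV_mult' DERIV_cmult D e)
      moreover have "(\<lambda>t. p t 1 * p t 1 + p t 2 * p t 2 + 2 * (p t 1 * (p t 2 * exp (- (q t 1 - q t 2)))))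
          = (\<lambda>t. (p t 1)^2 + (p t 2)^2 + 2 * p t 1 * p t 2 * exp (- (q t 1 - q t 2)))"
        by (simp add: fun_eq_iff power2_eq_square algebra_simps)
      moreover have "a * (a*b*E) + (a*b*E) * a + (b * (-(a*b*E)) + (-(a*b*E)) * b)
         + 2 * (a * (b * (E * (- ((a + b * E) - (b + a * E)))) + (-(a*b*E)) * E) + (a*b*E) * (b * E)) = 0"
        by (simp add: algebra_simps)
      ultimately show ?thesis by simp
    qed
  qed simp
  then obtain c where c: "\<forall>t\<in>{0..T}. (p t 1)^2 + (p t 2)^2 + 2 * p t 1 * p t 2 * exp (- (q t 1 - q t 2)) = c" by blast
  show "\<forall>t\<in>{0..T}. (p t 1)^2 + (p t 2)^2 + 2 * p t 1 * p t 2 * exp (- (q t 1 - q t 2))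
       = (p 0 1)^2 + (p 0 2)^2 + 2 * p 0 1 * p 0 2 * exp (- (q 0 1 - q 0 2))"
    proof
    fix t assume "t \<in> {0..T}"
    moreover then have "0 \<in> {0..T}" by auto
    ultimately show "(p t 1)^2 + (p t 2)^2 + 2 * p t 1 * p t 2 * exp (- (q t 1 - q t 2)) = (p 0 1)^2 + (p 0 2)^2 + 2 * p 0 1 * p 0 2 * exp (- (q 0 1 - q 0 2))" using c by metis
  qed
qed


lemma key_id: "(a+b)^2 * (1+E) + (a-b)^2 * (1-E) = 2 * (a^2 + b^2 + 2*a*b*(E::real))"
  by (simp add: power2_eq_square algebra_simps)

lemma bound:
  assumes sol: "hamiltonian_solution q p" and pos: "\<forall>t\<in>{0..T}. q t 1 > q t 2"
    and norm: "(p 0 1)\<^sup>2 + (p 0 2)\<^sup>2 + 2 * p 0 1 * p 0 2 * exp (- \<bar>q 0 1 - q 0 2\<bar>) = 1"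
    and cond: "\<bar>p 0 1 + p 0 2\<bar> > 1 \<or> p 0 1 - p 0 2 > 0"
    and t: "t \<in> {0..T}"
  shows "q t 1 - q t 2 \<ge> (if \<bar>p 0 1 + p 0 2\<bar> > 1 then - ln (2 / (p 0 1 + p 0 2)^2 - 1) else q 0 1 - q 0 2)"
proof -
  define s where "s = p 0 1 + p 0 2"
  have T: "0 \<in> {0..T}" using t by auto
  have r0: "q 0 1 > q 0 2" using pos T by auto
  have norm': "(p 0 1)\<^sup>2 + (p 0 2)\<^sup>2 + 2 * p 0 1 * p 0 2 * exp (- (q 0 1 - q 0 2)) = 1"
    using norm r0 by simp
  have sc: "\<And>u. u \<in> {0..T} \<Longrightarrow> p u 1 + p u 2 = s" using conserv(1)[OF sol pos] unfolding s_def by blast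
  have Fc: "\<And>u. u \<in> {0..T} \<Longrightarrow> (p u 1)^2 + (p u 2)^2 + 2 * p u 1 * p u 2 * exp (- (q u 1 - q u 2)) = 1"
    using conserv(2)[OF sol pos] norm' by metis
  have id: "\<And>u. u \<in> {0..T} \<Longrightarrow> s^2 * (1 + exp (- (q u 1 - q u 2))) + (p u 1 - p u 2)^2 * (1 - exp (- (q u 1 - q u 2))) = 2"
  proof -
    fix u assume u: "u \<in> {0..T}"
    show "s^2 * (1 + exp (- (q u 1 - q u 2))) + (p u 1 - p u 2)^2 * (1 - exp (- (q u 1 - q u 2))) = 2"
      using key_id[of "p u 1" "p u 2" "exp (- (q u 1 - q u 2))"] unfolding Fc[OF u] sc[OF u] by simp
  qed
  have Elt: "\<And>u. u \<in> {0..T} \<Longrightarrow> exp (- (q u 1 - q u 2)) < 1" using pos by auto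
  show ?thesis
  proof (cases "\<bar>s\<bar> > 1")
    case True
    define E where "E = exp (- (q t 1 - q t 2))"
    have "(p t 1 - p t 2)^2 * (1 - E) \<ge> 0" using Elt[OF t] E_def by simp
    moreover have "s^2 * (1 + E) + (p t 1 - p t 2)^2 * (1 - E) = 2" using id[OF t] unfolding E_def .
    ultimately have le: "s^2 * (1 + E) \<le> 2" by linarith
    have s2: "s^2 > 1" 
    proof -
      have "1 < \<bar>s\<bar>^2" using True by (intro one_less_power) auto
      then show ?thesis by simp
    qed
    have "E + 1 \<le> 2 / s^2" using le s2 by (subst pos_le_divide_eq) (auto simp: algebra_simps)
    then have "E \<le> 2 / s^2 - 1" by simp
    moreover have "E > 0" using E_def by simp
    ultimately have "ln E \<le> ln (2 / s^2 - 1)" by simp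
    then have "q t 1 - q t 2 \<ge> - ln (2 / s^2 - 1)" using E_def by simp
    then show ?thesis using True s_def by simp
  next
    case False
    then have d0: "p 0 1 - p 0 2 > 0" using cond s_def by auto
    have s2: "s^2 \<le> 1"
    proof -
      have "\<bar>s\<bar>^2 \<le> 1^2" using False by (intro power_mono) auto
      then show ?thesis by simp
    qed
    have dne: "p u 1 - p u 2 \<noteq> 0" if u: "u \<in> {0..T}" for u
    proof
      assume "p u 1 - p u 2 = 0"
      then have "s^2 * (1 + exp (- (q u 1 - q u 2))) = 2" using id[OF u] by simp
      moreover have "s^2 * (1 + exp (- (q u 1 - q u 2))) < 2"
      proof -
        have "s^2 * (1 + exp (- (q u 1 - q u 2))) \<le> 1 * (1 + exp (- (q u 1 - q u 2)))"
          using s2 by (intro mult_right_mono) auto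
        then show ?thesis using Elt[OF u] by (smt (verit))
      qed
      ultimately show False by simp
    qed
    have cd: "continuous_on {0..} (\<lambda>u. p u 1 - p u 2)"
      using cont[OF sol, of 1] cont[OF sol, of 2] by (intro continuous_on_diff) auto
    have dpos: "p u 1 - p u 2 > 0" if u: "u \<in> {0..T}" for u
    proof (rule ccontr)
      assume "\<not> ?thesis"
      then have "p u 1 - p u 2 \<le> 0" by simp
      moreover have "continuous_on {0..u} (\<lambda>u. p u 1 - p u 2)"
        by (rule continuous_on_subset[OF cd]) auto
      ultimately obtain x where x: "0 \<le> x" "x \<le> u" "p x 1 - p x 2 = 0"
        using IVT2'[of "\<lambda>u. p u 1 - p u 2" u 0 0] d0 u by auto
      then show False using dne[of x] u by auto
    qed
    have cr: "continuous_on {0..} (\<lambda>u. q u 1 - q u 2)"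
      using cont[OF sol, of 1] cont[OF sol, of 2] by (intro continuous_on_diff) auto
    have "q 0 1 - q 0 2 \<le> q t 1 - q t 2"
    proof (rule DERIV_nonneg_imp_increasing_open[of 0 t])
      show "0 \<le> t" using t by auto
      show "continuous_on {0..t} (\<lambda>u. q u 1 - q u 2)"
        by (rule continuous_on_subset[OF cr]) auto
      fix x :: real assume x: "0 < x" "x < t"
      then have xT: "x \<in> {0..T}" using t by auto
      note D = derivs[OF sol _ pos[rule_format, OF xT]]
      have "((\<lambda>u. q u 1 - q u 2) has_real_derivative
          (p x 1 + p x 2 * exp (- (q x 1 - q x 2))) - (p x 2 + p x 1 * exp (- (q x 1 - q x 2)))) (at x within {0<..})"
        using DERIV_diff[OF D(1) D(2)] x by (auto intro: DERIV_subset)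
      then have "((\<lambda>u. q u 1 - q u 2) has_real_derivative
          (p x 1 - p x 2) * (1 - exp (- (q x 1 - q x 2)))) (at x)"
        using at_within_open[of x "{0<..}"] x by (simp add: algebra_simps)
      moreover have "(p x 1 - p x 2) * (1 - exp (- (q x 1 - q x 2))) \<ge> 0"
        using dpos[OF xT] Elt[OF xT] by simp
      ultimately show "\<exists>y. ((\<lambda>u. q u 1 - q u 2) has_real_derivative y) (at x) \<and> 0 \<le> y" by blast
    qed
    then show ?thesis using False s_def by simp
  qed
qed


theorem lemma2:
  fixes q p :: "real \<Rightarrow> nat \<Rightarrow> real"
  assumes sol: "hamiltonian_solution q p"
    and init: "q 0 1 > q 0 2"
    and norm: "(p 0 1)\<^sup>2 + (p 0 2)\<^sup>2 + 2 * p 0 1 * p 0 2 * exp (- \<bar>q 0 1 - q 0 2\<bar>) = 1"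
    and cond: "\<bar>p 0 1 + p 0 2\<bar> > 1 \<or> p 0 1 - p 0 2 > 0"
  shows "(\<exists>\<delta>>0. \<forall>t\<ge>0. \<bar>q t 1 - q t 2\<bar> \<ge> \<delta>) \<and> (\<forall>t\<ge>0. q t 1 > q t 2)"
proof -
  define s where "s = p 0 1 + p 0 2"
  define \<delta> where "\<delta> = (if \<bar>p 0 1 + p 0 2\<bar> > 1 then - ln (2 / (p 0 1 + p 0 2)^2 - 1) else q 0 1 - q 0 2)"
  have B: "\<And>T t. \<forall>t\<in>{0..T}. q t 1 > q t 2 \<Longrightarrow> t \<in> {0..T} \<Longrightarrow> q t 1 - q t 2 \<ge> \<delta>"
    unfolding \<delta>_def by (rule bound[OF sol _ norm cond])
  have dpos: "\<delta> > 0"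
  proof (cases "\<bar>s\<bar> > 1")
    case True
    define E where "E = exp (- (q 0 1 - q 0 2))"
    have E: "0 < E" "E < 1" using init E_def by auto
    have "s^2 * (1 + E) + (p 0 1 - p 0 2)^2 * (1 - E) = 2"
      using key_id[of "p 0 1" "p 0 2" E] norm init unfolding s_def E_def by simp
    moreover have "(p 0 1 - p 0 2)^2 * (1 - E) \<ge> 0" using E by simp
    ultimately have le: "s^2 * (1 + E) \<le> 2" by linarith
    have s2: "s^2 > 1"
    proof -
      have "1 < \<bar>s\<bar>^2" using True by (intro one_less_power) auto
      then show ?thesis by simp
    qed
    have "0 < s^2 * E" using s2 E by (intro mult_pos_pos) auto
    then have "s^2 < s^2 * (1 + E)" by (simp add: distrib_left)
    then have "s^2 < 2" using le by linarith
    then have "1 < 2 / s^2" using s2 by (subst pos_less_divide_eq) auto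
    then have a: "0 < 2 / s^2 - 1" by simp
    have "2 / s^2 < 2" using s2 by (subst pos_divide_less_eq) auto
    then have b: "2 / s^2 - 1 < 1" by simp
    have "ln (2 / s^2 - 1) < 0" using a b by simp
    then show ?thesis using True unfolding \<delta>_def s_def by simp
  next
    case False
    then show ?thesis using init unfolding \<delta>_def s_def by simp
  qed
  have cr: "continuous_on {0..} (\<lambda>u. q u 1 - q u 2)"
    using cont[OF sol, of 1] cont[OF sol, of 2] by (intro continuous_on_diff) auto
  have r0: "q 0 1 - q 0 2 \<ge> \<delta>" using B[of 0 0] init by auto
  have posall: "q t 1 > q t 2" if t: "t \<ge> 0" for t
  proof (rule ccontr)
    assume "\<not> ?thesis"
    then have rt: "q t 1 - q t 2 \<le> \<delta>/2" using dpos by simp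
    define S where "S = {x \<in> {0..t}. q x 1 - q x 2 = \<delta>/2}"
    have ct: "continuous_on {0..t} (\<lambda>u. q u 1 - q u 2)"
      by (rule continuous_on_subset[OF cr]) auto
    have IV: "\<exists>x. 0 \<le> x \<and> x \<le> u \<and> q x 1 - q x 2 = \<delta>/2" if "u \<in> {0..t}" "q u 1 - q u 2 \<le> \<delta>/2" for u
    proof (rule IVT2')
      show "continuous_on {0..u} (\<lambda>u. q u 1 - q u 2)"
        by (rule continuous_on_subset[OF cr]) auto
    qed (use that r0 dpos in auto)
    have "S \<noteq> {}" using IV[of t] t rt unfolding S_def by auto
    moreover have "compact S"
    proof -
      have "closed S" unfolding S_def by (rule continuous_closed_preimage_constant[OF ct]) auto
      moreover have "bounded S" by (rule bounded_subset[of "{0..t}"]) (auto simp: S_def)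
      ultimately show ?thesis by (simp add: compact_eq_bounded_closed)
    qed
    ultimately obtain t0 where t0: "t0 \<in> S" "\<And>y. y \<in> S \<Longrightarrow> t0 \<le> y"
      using compact_attains_inf[of S] by blast
    have "\<forall>u\<in>{0..t0}. q u 1 > q u 2"
    proof
      fix u assume u: "u \<in> {0..t0}"
      show "q u 1 > q u 2"
      proof (rule ccontr)
        assume "\<not> ?thesis"
        then have "q u 1 - q u 2 \<le> \<delta>/2" using dpos by simp
        moreover have ut: "u \<in> {0..t}" using u t0(1) unfolding S_def by auto
        ultimately obtain x where x: "0 \<le> x" "x \<le> u" "q x 1 - q x 2 = \<delta>/2" using IV by blast
        then have "x \<in> S" using ut unfolding S_def by auto
        then have "t0 \<le> x" by (rule t0(2))
        then have "u = t0" using x u by auto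
        then show False using t0(1) \<open>\<not> q u 1 > q u 2\<close> dpos unfolding S_def by auto
      qed
    qed
    then have "q t0 1 - q t0 2 \<ge> \<delta>" using B[of t0 t0] t0(1) unfolding S_def by auto
    then show False using t0(1) dpos unfolding S_def by auto
  qed
  have "\<forall>t\<ge>0. \<bar>q t 1 - q t 2\<bar> \<ge> \<delta>"
  proof (intro allI impI)
    fix t :: real assume t: "t \<ge> 0"
    have "q t 1 - q t 2 \<ge> \<delta>" using B[of t t] posall t by auto
    then show "\<bar>q t 1 - q t 2\<bar> \<ge> \<delta>" by simp
  qed
  then show ?thesis using dpos posall by blast
qed

end
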